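(* Let $P$ be a finite poset and $t\geq 2$ an integer, and suppose $\mathrm{sat}^{\star}([t]^n,P)=O(1)$ as $n\to\infty$. Then there exists $N\in\mathbb{Z}_{>0}$ such that the function $n\mapsto\mathrm{sat}^{\star}([t]^n,P)$ is constant on the integers $n>N$.
   Context: For positive integers $n,t$, $[n]=\{1,\dots,n\}$ and the hypergrid $[t]^n$ is the set of functions $f:[n]\to[t]$, partially ordered by $f\leq g$ iff $f(i)\leq g(i)$ for all $i\in[n]$. An induced copy of a poset $P$ in a family $\mathcal{F}\subseteq[t]^n$ is an injective map $\phi:P\to\mathcal{F}$ such that $\phi(x)\leq\phi(y)$ iff $x\leq_P y$. A family $\mathcal{F}\subseteq[t]^n$ is induced $P$-free if it contains no induced copy of $P$; it is induced $P$-saturated if it is induced $P$-free and for every $f\in[t]^n\setminus\mathcal{F}$ the family $\mathcal{F}\cup\{f\}$ contains an induced copy of $P$. Whenever $P$ embeds as an induced subposet of $[t]^n$, $\mathrm{sat}^{\star}([t]^n,P)$ denotes the minimum size of an induced $P$-saturated family in $[t]^n$. *)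

theory Defs
  imports Main "HOL-Library.FuncSet" "HOL-Library.Landau_Symbols"
begin

text \<open>The hypergrid [t]^n: functions [n] -> [t], represented extensionally
  (value undefined outside {1..n}).\<close>
definition grid :: "nat \<Rightarrow> nat \<Rightarrow> (nat \<Rightarrow> nat) set" where
  "grid t n = ({1..n} \<rightarrow>\<^sub>E {1..t})"

definition grid_le :: "nat \<Rightarrow> (nat \<Rightarrow> nat) \<Rightarrow> (nat \<Rightarrow> nat) \<Rightarrow> bool" where
  "grid_le n f g \<longleftrightarrow> (\<forall>i\<in>{1..n}. f i \<le> g i)"

definition is_finite_poset :: "'a set \<Rightarrow> ('a \<Rightarrow> 'a \<Rightarrow> bool) \<Rightarrow> bool" where
  "is_finite_poset X le \<longleftrightarrow> finite X
     \<and> (\<forall>x\<in>X. le x x)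
     \<and> (\<forall>x\<in>X. \<forall>y\<in>X. le x y \<and> le y x \<longrightarrow> x = y)
     \<and> (\<forall>x\<in>X. \<forall>y\<in>X. \<forall>z\<in>X. le x y \<and> le y z \<longrightarrow> le x z)"

definition induced_copy ::
  "nat \<Rightarrow> 'a set \<Rightarrow> ('a \<Rightarrow> 'a \<Rightarrow> bool) \<Rightarrow> (nat \<Rightarrow> nat) set \<Rightarrow> ('a \<Rightarrow> (nat \<Rightarrow> nat)) \<Rightarrow> bool" where
  "induced_copy n X le F \<phi> \<longleftrightarrow> inj_on \<phi> X \<and> \<phi> ` X \<subseteq> F
     \<and> (\<forall>x\<in>X. \<forall>y\<in>X. grid_le n (\<phi> x) (\<phi> y) \<longleftrightarrow> le x y)"

definition induced_free ::
  "nat \<Rightarrow> 'a set \<Rightarrow> ('a \<Rightarrow> 'a \<Rightarrow> bool) \<Rightarrow> (nat \<Rightarrow> nat) set \<Rightarrow> bool" where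
  "induced_free n X le F \<longleftrightarrow> \<not> (\<exists>\<phi>. induced_copy n X le F \<phi>)"

definition induced_saturated ::
  "nat \<Rightarrow> nat \<Rightarrow> 'a set \<Rightarrow> ('a \<Rightarrow> 'a \<Rightarrow> bool) \<Rightarrow> (nat \<Rightarrow> nat) set \<Rightarrow> bool" where
  "induced_saturated t n X le F \<longleftrightarrow> F \<subseteq> grid t n \<and> induced_free n X le F
     \<and> (\<forall>f \<in> grid t n - F. \<not> induced_free n X le (insert f F))"

definition sat_star :: "nat \<Rightarrow> nat \<Rightarrow> 'a set \<Rightarrow> ('a \<Rightarrow> 'a \<Rightarrow> bool) \<Rightarrow> nat" where
  "sat_star t n X le = Min (card ` {F. induced_saturated t n X le F})"

end

theory Submission
  imports Defs
begin

lemma copy_transfer: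
  assumes "A \<subseteq> G" "inj_on h G"
    and "\<forall>a\<in>G. \<forall>b\<in>G. grid_le m (h a) (h b) \<longleftrightarrow> grid_le n a b"
    and "induced_copy n X le A \<phi>"
  shows "induced_copy m X le (h ` A) (h \<circ> \<phi>)"
proof -
  have img: "\<phi> ` X \<subseteq> A" and inj: "inj_on \<phi> X"
    and ord: "\<forall>x\<in>X. \<forall>y\<in>X. grid_le n (\<phi> x) (\<phi> y) \<longleftrightarrow> le x y"
    using assms(4) unfolding induced_copy_def by auto
  have "inj_on h (\<phi> ` X)" using assms(1,2) img by (meson inj_on_subset order_trans)
  hence "inj_on (h \<circ> \<phi>) X" using inj by (simp add: comp_inj_on)
  moreover have "(h \<circ> \<phi>) ` X \<subseteq> h ` A" using img by auto
  moreover have "\<forall>x\<in>X. \<forall>y\<in>X. grid_le m ((h \<circ> \<phi>) x) ((h \<circ> \<phi>) y) \<longleftrightarrow> le x y"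
  proof (intro ballI)
    fix x y assume xy: "x \<in> X" "y \<in> X"
    hence "\<phi> x \<in> G" "\<phi> y \<in> G" using img assms(1) by auto
    thus "grid_le m ((h \<circ> \<phi>) x) ((h \<circ> \<phi>) y) \<longleftrightarrow> le x y"
      using ord assms(3) xy by auto
  qed
  ultimately show ?thesis unfolding induced_copy_def by blast
qed

definition rr :: "nat \<Rightarrow> nat \<Rightarrow> (nat \<Rightarrow> nat) \<Rightarrow> (nat \<Rightarrow> nat)" where
  "rr m d f = (\<lambda>k. if k \<in> {1..m} then (if k = d then f (Suc m) else f k) else undefined)"

definition ee :: "nat \<Rightarrow> nat \<Rightarrow> nat \<Rightarrow> (nat \<Rightarrow> nat) \<Rightarrow> (nat \<Rightarrow> nat)" where
  "ee m d q g = (\<lambda>k. if k \<in> {1..Suc m} then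
      g (if (if k = d then q else k) = Suc m then d else (if k = d then q else k)) else undefined)"

context
  fixes m d q t :: nat
  assumes dq: "d \<in> {1..Suc m}" "q \<in> {1..Suc m}" "d \<noteq> q"
begin

definition "good = {f \<in> grid t (Suc m). f d = f q}"

lemma rr_grid: "f \<in> grid t (Suc m) \<Longrightarrow> rr m d f \<in> grid t m"
  unfolding grid_def rr_def by (auto simp: PiE_def Pi_def extensional_def)

lemma ee_grid: "g \<in> grid t m \<Longrightarrow> ee m d q g \<in> good"
  using dq unfolding good_def grid_def ee_def by (auto simp: PiE_def Pi_def extensional_def)

lemma rr_ee: "g \<in> grid t m \<Longrightarrow> rr m d (ee m d q g) = g"
  using dq unfolding grid_def rr_def ee_def by (auto simp: PiE_def extensional_def)

lemma ee_rr: "f \<in> good \<Longrightarrow> ee m d q (rr m d f) = f"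
proof (rule ext)
  fix k assume f: "f \<in> good"
  show "ee m d q (rr m d f) k = f k"
    using dq f unfolding good_def grid_def rr_def ee_def
    by (cases "k \<in> {1..Suc m}") (auto simp: PiE_def extensional_def)
qed

lemma rr_inj: "inj_on (rr m d) good"
  by (metis ee_rr inj_on_inverseI)

lemma rr_ord: "a \<in> good \<Longrightarrow> b \<in> good \<Longrightarrow> grid_le m (rr m d a) (rr m d b) \<longleftrightarrow> grid_le (Suc m) a b"
proof
  assume ab: "a \<in> good" "b \<in> good"
  assume H: "grid_le m (rr m d a) (rr m d b)"
  have nd: "a j \<le> b j" if j: "j \<in> {1..Suc m}" "j \<noteq> d" for j
  proof (cases "j = Suc m")
    case True
    hence "d \<in> {1..m}" using dq j by auto
    hence "rr m d a d \<le> rr m d b d" using H unfolding grid_le_def by blast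
    thus ?thesis using True \<open>d \<in> {1..m}\<close> unfolding rr_def by simp
  next
    case False
    hence "j \<in> {1..m}" using j by auto
    hence "rr m d a j \<le> rr m d b j" using H unfolding grid_le_def by blast
    thus ?thesis using j \<open>j \<in> {1..m}\<close> unfolding rr_def by simp
  qed
  show "grid_le (Suc m) a b" unfolding grid_le_def
  proof
    fix k assume k: "k \<in> {1..Suc m}"
    show "a k \<le> b k"
    proof (cases "k = d")
      case True
      have "a q \<le> b q" using nd[of q] dq by auto
      thus ?thesis using True ab unfolding good_def by simp
    qed (use nd k in auto)
  qed
next
  assume "grid_le (Suc m) a b"
  thus "grid_le m (rr m d a) (rr m d b)" unfolding grid_le_def rr_def by auto
qed

lemma ee_ord: "g1 \<in> grid t m \<Longrightarrow> g2 \<in> grid t m \<Longrightarrow>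
   grid_le (Suc m) (ee m d q g1) (ee m d q g2) \<longleftrightarrow> grid_le m g1 g2"
  using rr_ord[of "ee m d q g1" "ee m d q g2"] ee_grid rr_ee by simp

lemma ee_inj: "inj_on (ee m d q) (grid t m)"
  by (metis rr_ee inj_on_inverseI)

lemma reduce:
  assumes sat: "induced_saturated t (Suc m) X le F"
    and eq: "\<forall>f\<in>F. f d = f q"
  shows "induced_saturated t m X le (rr m d ` F) \<and> card (rr m d ` F) = card F"
proof -
  have Fsub: "F \<subseteq> grid t (Suc m)" and free: "induced_free (Suc m) X le F"
    and satur: "\<forall>f \<in> grid t (Suc m) - F. \<not> induced_free (Suc m) X le (insert f F)"
    using sat unfolding induced_saturated_def by auto
  have Fg: "F \<subseteq> good" using Fsub eq unfolding good_def by auto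
  have rord: "\<forall>a\<in>good. \<forall>b\<in>good. grid_le m (rr m d a) (rr m d b) \<longleftrightarrow> grid_le (Suc m) a b"
    using rr_ord by blast
  have eord: "\<forall>a\<in>grid t m. \<forall>b\<in>grid t m. grid_le (Suc m) (ee m d q a) (ee m d q b) \<longleftrightarrow> grid_le m a b"
    using ee_ord by blast
  let ?F = "rr m d ` F"
  have sub: "?F \<subseteq> grid t m" using Fsub rr_grid by auto
  have bk: "ee m d q ` ?F = F"
  proof -
    have "ee m d q ` ?F = (ee m d q \<circ> rr m d) ` F" by (simp add: image_comp)
    also have "\<dots> = F" using Fg ee_rr by (auto simp: image_iff) (metis subsetD)
    finally show ?thesis .
  qed
  have free': "induced_free m X le ?F"
    unfolding induced_free_def
  proof
    assume "\<exists>\<phi>. induced_copy m X le ?F \<phi>"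
    then obtain \<phi> where "induced_copy m X le ?F \<phi>" by blast
    from copy_transfer[OF sub ee_inj eord this] have "induced_copy (Suc m) X le F (ee m d q \<circ> \<phi>)"
      using bk by simp
    thus False using free unfolding induced_free_def by blast
  qed
  have sat': "\<forall>g \<in> grid t m - ?F. \<not> induced_free m X le (insert g ?F)"
  proof
    fix g assume g: "g \<in> grid t m - ?F"
    have eg: "ee m d q g \<in> good" using g ee_grid by auto
    have "ee m d q g \<notin> F"
    proof
      assume "ee m d q g \<in> F"
      hence "rr m d (ee m d q g) \<in> ?F" by blast
      thus False using g rr_ee by auto
    qed
    moreover have "ee m d q g \<in> grid t (Suc m)" using eg unfolding good_def by auto
    ultimately have "\<not> induced_free (Suc m) X le (insert (ee m d q g) F)" using satur by auto
    then obtain \<phi> where \<phi>: "induced_copy (Suc m) X le (insert (ee m d q g) F) \<phi>"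
      unfolding induced_free_def by blast
    have "insert (ee m d q g) F \<subseteq> good" using eg Fg by auto
    from copy_transfer[OF this rr_inj rord \<phi>]
    have "induced_copy m X le (rr m d ` insert (ee m d q g) F) (rr m d \<circ> \<phi>)" .
    moreover have "rr m d ` insert (ee m d q g) F = insert g ?F" using g rr_ee by auto
    ultimately show "\<not> induced_free m X le (insert g ?F)" unfolding induced_free_def by auto
  qed
  have "card ?F = card F" using card_image inj_on_subset[OF rr_inj Fg] by blast
  thus ?thesis using sub free' sat' unfolding induced_saturated_def by blast
qed

end


lemma finite_grid: "finite (grid t n)"
  unfolding grid_def by (intro finite_PiE) auto

lemma pigeon:
  assumes "F \<subseteq> grid t (Suc m)" "t ^ card F < Suc m"
  shows "\<exists>d q. d \<in> {1..Suc m} \<and> q \<in> {1..Suc m} \<and> d \<noteq> q \<and> (\<forall>f\<in>F. f d = f q)"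
proof (rule ccontr)
  assume na: "\<not> ?thesis"
  define \<tau> where "\<tau> i = restrict (\<lambda>f. f i) F" for i :: nat
  have "inj_on \<tau> {1..Suc m}"
  proof (rule inj_onI)
    fix d q assume dq: "d \<in> {1..Suc m}" "q \<in> {1..Suc m}" "\<tau> d = \<tau> q"
    have "\<forall>f\<in>F. f d = f q"
    proof
      fix f assume "f \<in> F"
      from fun_cong[OF dq(3), of f] show "f d = f q" using \<open>f \<in> F\<close> unfolding \<tau>_def by simp
    qed
    thus "d = q" using na dq by blast
  qed
  moreover have "\<tau> ` {1..Suc m} \<subseteq> F \<rightarrow>\<^sub>E {1..t}"
    using assms(1) unfolding \<tau>_def grid_def by (auto simp: PiE_def Pi_def)
  moreover have "finite F" using assms(1) finite_grid finite_subset by blast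
  ultimately have "card {1..Suc m} \<le> card (F \<rightarrow>\<^sub>E {1..t})"
    using card_inj_on_le finite_PiE[of F "\<lambda>_. {1..t}"] by blast
  also have "\<dots> = t ^ card F" using \<open>finite F\<close> by (simp add: card_PiE)
  finally show False using assms(2) by simp
qed

lemma reduce2:
  assumes "induced_saturated t (Suc m) X le F" "t ^ card F < Suc m"
  shows "\<exists>F'. induced_saturated t m X le F' \<and> card F' = card F"
proof -
  have "F \<subseteq> grid t (Suc m)" using assms(1) unfolding induced_saturated_def by auto
  then obtain d q where "d \<in> {1..Suc m}" "q \<in> {1..Suc m}" "d \<noteq> q" "\<forall>f\<in>F. f d = f q"
    using pigeon assms(2) by blast
  from reduce[OF this(1-3) assms(1) this(4)] show ?thesis by blast
qed

lemma finite_sats: "finite (card ` {F. induced_saturated t n X le F})"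
proof -
  have "{F. induced_saturated t n X le F} \<subseteq> Pow (grid t n)"
    unfolding induced_saturated_def by auto
  moreover have "finite (Pow (grid t n))" using finite_grid by simp
  ultimately show ?thesis using finite_subset by (intro finite_imageI) blast
qed

lemma mono_step:
  assumes "{F. induced_saturated t (Suc m) X le F} \<noteq> {}"
    and "t ^ sat_star t (Suc m) X le < Suc m"
  shows "sat_star t m X le \<le> sat_star t (Suc m) X le"
proof -
  have "sat_star t (Suc m) X le \<in> card ` {F. induced_saturated t (Suc m) X le F}"
    unfolding sat_star_def using assms(1) finite_sats by (intro Min_in) auto
  then obtain F where F: "induced_saturated t (Suc m) X le F" "card F = sat_star t (Suc m) X le"
    by auto
  then obtain F' where "induced_saturated t m X le F'" "card F' = card F"
    using reduce2 assms(2) by metis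
  hence "card F' \<in> card ` {F. induced_saturated t m X le F}" by blast
  hence "Min (card ` {F. induced_saturated t m X le F}) \<le> card F'"
    using finite_sats by (intro Min_le) auto
  hence "sat_star t m X le \<le> card F'" unfolding sat_star_def .
  thus ?thesis using F \<open>card F' = card F\<close> by simp
qed

lemma exists_sat:
  assumes "X \<noteq> {}"
  shows "{F. induced_saturated t n X le F} \<noteq> {}"
proof -
  let ?C = "{F. F \<subseteq> grid t n \<and> induced_free n X le F}"
  have "\<not> induced_copy n X le {} \<phi>" for \<phi> using assms unfolding induced_copy_def by blast
  hence "{} \<in> ?C" unfolding induced_free_def by blast
  moreover have "\<forall>F. F \<in> ?C \<longrightarrow> card F < Suc (card (grid t n))"
  proof (intro allI impI)
    fix F assume "F \<in> ?C"
    hence "card F \<le> card (grid t n)" using finite_grid card_mono by blast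
    thus "card F < Suc (card (grid t n))" by simp
  qed
  ultimately obtain F where F: "F \<in> ?C" and mx: "\<forall>G. G \<in> ?C \<longrightarrow> card G \<le> card F"
    using ex_has_greatest_nat[of "\<lambda>F. F \<in> ?C" "{}" card "Suc (card (grid t n))"] by auto
  have "induced_saturated t n X le F"
    unfolding induced_saturated_def
  proof (intro conjI)
    show "F \<subseteq> grid t n" "induced_free n X le F" using F by auto
    show "\<forall>f\<in>grid t n - F. \<not> induced_free n X le (insert f F)"
    proof
    fix f assume f: "f \<in> grid t n - F"
    show "\<not> induced_free n X le (insert f F)"
    proof
      assume "induced_free n X le (insert f F)"
      hence "insert f F \<in> ?C" using F f by auto
      hence "card (insert f F) \<le> card F" using mx by blast
      moreover have "finite F" using F finite_grid finite_subset by blast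
      ultimately show False using f by simp
    qed
    qed
  qed
  thus ?thesis by blast
qed


lemma nat_le_ceil: "real (k::nat) \<le> (c::real) \<Longrightarrow> k \<le> nat \<lceil>c\<rceil>"
  by linarith

theorem mainTheorem2:
  fixes X :: "'a set" and le :: "'a \<Rightarrow> 'a \<Rightarrow> bool" and t :: nat
  assumes "is_finite_poset X le"
    and "t \<ge> 2"
    and "(\<lambda>n. real (sat_star t n X le)) \<in> O(\<lambda>_. 1)"
  shows "\<exists>N::nat. N > 0 \<and> (\<forall>n m. n > N \<longrightarrow> m > N \<longrightarrow> sat_star t n X le = sat_star t m X le)"
proof (cases "X = {}")
  case True
  have E0: "{F. induced_saturated t n X le F} = {}" for n
  proof -
    have "induced_copy n X le F \<phi>" for F \<phi> using True unfolding induced_copy_def by simp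
    thus ?thesis unfolding induced_saturated_def induced_free_def by blast
  qed
  have E: "sat_star t n X le = Min (card ` ({}::(nat \<Rightarrow> nat) set set))" for n
    unfolding sat_star_def E0 by (rule refl)
  hence "sat_star t n X le = sat_star t m X le" for n m by simp
  thus ?thesis by (intro exI[of _ 1]) auto
next
  case False
  let ?s = "\<lambda>n. sat_star t n X le"
  from assms(3) obtain c where "c > 0"
    "eventually (\<lambda>n. norm (real (?s n)) \<le> c * norm (1::real)) at_top"
    by (elim landau_o.bigE)
  then obtain N0 where N0: "\<forall>n\<ge>N0. real (?s n) \<le> c"
    by (auto simp: eventually_at_top_linorder)
  define B where "B = nat \<lceil>c\<rceil>"
  have bnd: "?s n \<le> B" if "n \<ge> N0" for n
    unfolding B_def by (rule nat_le_ceil) (use N0 that in blast)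
  define M where "M = max N0 (t ^ B)"
  have mono: "?s m \<le> ?s (Suc m)" if "m \<ge> M" for m
  proof -
    have "?s (Suc m) \<le> B" using bnd that unfolding M_def by auto
    hence "t ^ ?s (Suc m) \<le> t ^ B" using assms(2) by (intro power_increasing) auto
    also have "\<dots> \<le> m" using that unfolding M_def by auto
    finally have "t ^ ?s (Suc m) < Suc m" by simp
    thus ?thesis by (rule mono_step[OF exists_sat[OF False]])
  qed
  have "\<forall>n. n \<ge> M \<longrightarrow> ?s n < Suc B"
  proof (intro allI impI)
    fix n assume "n \<ge> M"
    hence "n \<ge> N0" unfolding M_def by simp
    hence "?s n \<le> B" by (rule bnd)
    thus "?s n < Suc B" by simp
  qed
  from ex_has_greatest_nat[of "\<lambda>n. n \<ge> M" M ?s "Suc B", OF order_refl this]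
  obtain n1 where n1: "n1 \<ge> M" "\<forall>n. n \<ge> M \<longrightarrow> ?s n \<le> ?s n1"
    by blast
  have up: "?s n1 \<le> ?s n" if "n1 \<le> n" for n
    using that
  proof (induction n rule: dec_induct)
    case base
    then show ?case by simp
  next
    case (step k)
    have "k \<ge> M" using step(1) n1(1) by simp
    hence "?s k \<le> ?s (Suc k)" by (rule mono)
    then show ?case using step(3) by simp
  qed
  have const: "?s n = ?s n1" if "n \<ge> n1" for n
  proof -
    have "n \<ge> M" using that n1(1) by simp
    hence "?s n \<le> ?s n1" using n1(2) by blast
    thus ?thesis using up[OF that] by simp
  qed
  show ?thesis
  proof (intro exI[of _ "Suc n1"] conjI allI impI)
    fix n m assume "Suc n1 < n" "Suc n1 < m"
    hence "n \<ge> n1" "m \<ge> n1" by simp_all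
    from const[OF this(1)] const[OF this(2)] show "?s n = ?s m" by simp
  qed simp
qed

end
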